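(* For every $n\ge2$, the sum of the Wiener indices of all plane trees on $n$ vertices is $$\sum_T\ \sum_{\{u,w\}} d(u,w)=(n-1)4^{n-2},$$ where $T$ ranges over plane trees on $n$ vertices and $\{u,w\}$ over unordered pairs of distinct vertices of $T$. Consequently, the expected distance between a uniformly random pair of distinct vertices in a uniformly random plane tree on $n$ vertices equals $\frac{(2n-2)!!}{2(2n-3)!!}$. This equals the expected length of the root-to-leaf path for a uniformly random pair (plane tree on $n$ vertices, leaf of it).
   Context: General (plane) trees are rooted trees in which each vertex may have any number of children, linearly ordered. The size of a tree is its number of vertices, and a leaf is a vertex with no children. $d(u,w)$ is the number of edges of the path between $u$ and $w$. The double factorials are $(2m)!!=2\cdot4\cdots(2m)$ and $(2m-1)!!=1\cdot3\cdots(2m-1)$. *)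

theory Defs
  imports Complex_Main
begin

datatype ptree = Node "ptree list"

fun tsize :: "ptree \<Rightarrow> nat" where
  "tsize (Node ts) = Suc (sum_list (map tsize ts))"

text \<open>Vertices are addressed by positions: the list of child indices on the
  path from the root.  subt t p is the subtree rooted at position p, if p is a
  valid position.\<close>
fun subt :: "ptree \<Rightarrow> nat list \<Rightarrow> ptree option" where
  "subt t [] = Some t"
| "subt (Node ts) (i # p) = (if i < length ts then subt (ts ! i) p else None)"

definition vertices :: "ptree \<Rightarrow> nat list set" where
  "vertices t = {p. subt t p \<noteq> None}"

definition leaves :: "ptree \<Rightarrow> nat list set" where
  "leaves t = {p. subt t p = Some (Node [])}"

definition depth :: "nat list \<Rightarrow> nat" where
  "depth p = length p"

text \<open>Longest common prefix of two positions = position of their lowest common ancestor.\<close>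
fun lcp :: "nat list \<Rightarrow> nat list \<Rightarrow> nat list" where
  "lcp (a # p) (b # q) = (if a = b then a # lcp p q else [])"
| "lcp _ _ = []"

definition tdist :: "nat list \<Rightarrow> nat list \<Rightarrow> nat" where
  "tdist u w = length u + length w - 2 * length (lcp u w)"

definition pair_dist :: "nat list set \<Rightarrow> nat" where
  "pair_dist e = (SOME d. \<exists>u w. e = {u, w} \<and> d = tdist u w)"

definition vpairs :: "ptree \<Rightarrow> nat list set set" where
  "vpairs t = {{u, w} | u w. u \<in> vertices t \<and> w \<in> vertices t \<and> u \<noteq> w}"

definition wiener :: "ptree \<Rightarrow> nat" where
  "wiener t = (\<Sum>e\<in>vpairs t. pair_dist e)"

definition plane_trees :: "nat \<Rightarrow> ptree set" where
  "plane_trees n = {t. tsize t = n}"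

fun dfact :: "nat \<Rightarrow> nat" where
  "dfact 0 = 1"
| "dfact (Suc 0) = 1"
| "dfact (Suc (Suc k)) = Suc (Suc k) * dfact k"

end

theory Submission imports Defs "HOL-Computational_Algebra.Formal_Power_Series" begin

lemma tsize_pos: "tsize t \<ge> 1"
  by (cases t) auto

definition join :: "ptree \<Rightarrow> ptree \<Rightarrow> ptree" where
  "join t u = (case u of Node f \<Rightarrow> Node (t # f))"

lemma tsize_join[simp]: "tsize (join t u) = tsize t + tsize u"
  by (cases u) (simp add: join_def)

lemma ptree_cases_join: obtains "t = Node []" | a b where "t = join a b"
proof (cases t)
  case (Node ts)
  show ?thesis
  proof (cases ts)
    case Nil then show ?thesis using Node that by simp
  next
    case (Cons a f) then show ?thesis using Node that(2)[of a "Node f"] by (simp add: join_def)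
  qed
qed

lemma ptree_join_induct[case_names leaf join]:
  assumes "P (Node [])" "\<And>a b. P a \<Longrightarrow> P b \<Longrightarrow> P (join a b)"
  shows "P t"
proof (induction "tsize t" arbitrary: t rule: less_induct)
  case less
  show ?case
  proof (cases t rule: ptree_cases_join)
    case 1 then show ?thesis using assms by simp
  next
    case (2 a b)
    have "tsize a < tsize t" "tsize b < tsize t" using tsize_pos[of a] tsize_pos[of b] 2 by auto
    then have "P a" "P b" using less by auto
    then show ?thesis using 2 assms(2) by simp
  qed
qed

fun sh :: "nat list \<Rightarrow> nat list" where
  "sh [] = []" | "sh (i # q) = Suc i # q"

lemma sh_Nil_iff[simp]: "sh p = [] \<longleftrightarrow> p = []" "[] = sh p \<longleftrightarrow> p = []"
  by (cases p; auto)+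

lemma sh_Cons0[simp]: "sh p \<noteq> 0 # q" "0 # q \<noteq> sh p"
  by (cases p; auto)+

lemma sh_inj: "inj sh"
proof (rule injI)
  fix x y :: "nat list" assume "sh x = sh y" then show "x = y" by (cases x; cases y) auto
qed

lemma length_sh[simp]: "length (sh p) = length p"
  by (cases p) auto

lemma subt_join0[simp]: "subt (join t u) (0 # q) = subt t q"
  by (cases u) (simp add: join_def)

lemma subt_join_sh: "p \<noteq> [] \<Longrightarrow> subt (join t u) (sh p) = subt u p"
  by (cases u; cases p) (auto simp: join_def)

lemma Cons0_img: "0#q \<in> Cons 0 ` A \<longleftrightarrow> q \<in> A" by auto
lemma sh_img0: "0#q \<notin> sh ` A" by auto

lemma vertices_join: "vertices (join t u) = Cons 0 ` vertices t \<union> sh ` vertices u"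
proof -
  have "x \<in> vertices (join t u) \<longleftrightarrow> x \<in> Cons 0 ` vertices t \<union> sh ` vertices u" for x
  proof (cases x)
    case Nil
    have "[] \<in> vertices u" by (simp add: vertices_def)
    then have "[] \<in> sh ` vertices u" by (metis image_eqI sh.simps(1))
    then show ?thesis using Nil by (simp add: vertices_def)
  next
    case (Cons i q)
    show ?thesis
    proof (cases i)
      case 0
      then have x: "x = 0 # q" using Cons by simp
      have "0#q \<in> vertices (join t u) \<longleftrightarrow> q \<in> vertices t" unfolding vertices_def mem_Collect_eq subt_join0 ..
      then show ?thesis unfolding x Cons0_img Un_iff using sh_img0[of q "vertices u"] by blast
    next
      case (Suc j)
      have x: "x = sh (j # q)" using Cons Suc by simp
      have "x \<notin> Cons 0 ` vertices t" using Cons Suc by auto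
      moreover have "x \<in> sh ` vertices u \<longleftrightarrow> j#q \<in> vertices u"
        unfolding x by (rule inj_image_mem_iff[OF sh_inj])
      moreover have "x \<in> vertices (join t u) \<longleftrightarrow> j#q \<in> vertices u"
        unfolding x vertices_def using subt_join_sh[of "j#q" t u] by simp
      ultimately show ?thesis by blast
    qed
  qed
  then show ?thesis by (rule set_eqI)
qed

lemma subt_leaf_None: "p \<noteq> [] \<Longrightarrow> subt (Node []) p = None"
  by (cases p) auto

lemma vertices_leaf[simp]: "vertices (Node []) = {[]}"
proof (rule set_eqI)
  fix p show "p \<in> vertices (Node []) \<longleftrightarrow> p \<in> {[]}" by (cases p) (simp_all add: vertices_def)
qed

lemma leaves_leaf[simp]: "leaves (Node []) = {[]}"
proof (rule set_eqI)
  fix p show "p \<in> leaves (Node []) \<longleftrightarrow> p \<in> {[]}" by (cases p) (simp_all add: leaves_def)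
qed

lemma leaves_join: "leaves (join t u) = Cons 0 ` leaves t \<union> sh ` (leaves u - {[]})"
proof -
  have "x \<in> leaves (join t u) \<longleftrightarrow> x \<in> Cons 0 ` leaves t \<union> sh ` (leaves u - {[]})" for x
  proof (cases x)
    case Nil
    have "join t u \<noteq> Node []" by (cases u) (simp add: join_def)
    then have "[] \<notin> leaves (join t u)" by (simp add: leaves_def)
    moreover have "[] \<notin> Cons 0 ` leaves t" by blast
    moreover have "[] \<notin> sh ` (leaves u - {[]})" using sh_Nil_iff by blast
    ultimately show ?thesis using Nil by simp
  next
    case (Cons i q)
    show ?thesis
    proof (cases i)
      case 0
      then have x: "x = 0 # q" using Cons by simp
      have "0#q \<in> leaves (join t u) \<longleftrightarrow> q \<in> leaves t" unfolding leaves_def mem_Collect_eq subt_join0 ..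
      then show ?thesis unfolding x Cons0_img Un_iff using sh_img0[of q "(leaves u - {[]})"] by blast
    next
      case (Suc j)
      have x: "x = sh (j # q)" using Cons Suc by simp
      have "x \<notin> Cons 0 ` leaves t" using Cons Suc by auto
      moreover have "x \<in> sh ` (leaves u - {[]}) \<longleftrightarrow> j#q \<in> leaves u"
        unfolding x by (subst inj_image_mem_iff[OF sh_inj]) simp
      moreover have "x \<in> leaves (join t u) \<longleftrightarrow> j#q \<in> leaves u"
        unfolding x leaves_def using subt_join_sh[of "j#q" t u] by simp
      ultimately show ?thesis by blast
    qed
  qed
  then show ?thesis by (rule set_eqI)
qed

lemma leaves_sub: "leaves t \<subseteq> vertices t"
  by (auto simp: leaves_def vertices_def)

lemma disj: "Cons 0 ` A \<inter> sh ` B = {}"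
  by auto

lemma vertices_finite_card: "finite (vertices t) \<and> card (vertices t) = tsize t"
proof (induction t rule: ptree_join_induct)
  case leaf then show ?case by simp
next
  case (join a b)
  have "inj_on (Cons 0) (vertices a)" by (simp add: inj_on_def)
  moreover have "inj_on sh (vertices b)" using sh_inj by (simp add: inj_on_def inj_def)
  ultimately have c: "card (Cons 0 ` vertices a) = tsize a" "card (sh ` vertices b) = tsize b"
    using join by (simp_all add: card_image)
  have f: "finite (Cons 0 ` vertices a)" "finite (sh ` vertices b)" using join by auto
  have "card (Cons 0 ` vertices a \<union> sh ` vertices b) = tsize a + tsize b"
    using card_Un_disjoint[OF f disj] c by simp
  then show ?case using f unfolding vertices_join by simp
qed

lemma finite_vertices[simp]: "finite (vertices t)" using vertices_finite_card by blast
lemma card_vertices[simp]: "card (vertices t) = tsize t" using vertices_finite_card by blast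
lemma finite_leaves[simp]: "finite (leaves t)" using leaves_sub finite_vertices by (rule finite_subset)

lemma leaf_in_leaves: "[] \<in> leaves u \<longleftrightarrow> u = Node []"
  by (auto simp: leaves_def)


lemma lcp_len: "length (lcp p q) \<le> length p \<and> length (lcp p q) \<le> length q"
  by (induction p q rule: lcp.induct) auto

lemma lcp_self[simp]: "lcp p p = p"
  by (induction p) auto

lemma lcp_sym: "lcp p q = lcp q p"
  by (induction p q rule: lcp.induct) auto

lemma tdist_self[simp]: "tdist p p = 0"
  by (simp add: tdist_def)

lemma tdist_sym: "tdist p q = tdist q p"
  by (simp add: tdist_def lcp_sym)

lemma tdist_same[simp]: "tdist (a#p) (a#q) = tdist p q"
  using lcp_len[of p q] by (simp add: tdist_def)

lemma tdist_0_sh[simp]: "tdist (0#p) (sh q) = length p + 1 + length q"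
  by (cases q) (simp_all add: tdist_def)

lemma tdist_sh_0[simp]: "tdist (sh q) (0#p) = length q + 1 + length p"
  by (cases q) (simp_all add: tdist_def)

lemma tdist_sh_sh[simp]: "tdist (sh p) (sh q) = tdist p q"
proof (cases p)
  case Nil then show ?thesis by (cases q) (simp_all add: tdist_def)
next
  case (Cons i p') then show ?thesis
    using lcp_len[of p' ] by (cases q) (simp_all add: tdist_def)
qed

lemma sum_split:
  assumes "finite A" "finite B"
  shows "(\<Sum>x\<in>Cons 0 ` A \<union> sh ` B. f x) = (\<Sum>a\<in>A. f (0#a)) + (\<Sum>b\<in>B. f (sh b))"
proof -
  have i1: "inj_on (Cons 0) A" by (simp add: inj_on_def)
  have i2: "inj_on sh B" using sh_inj by (simp add: inj_on_def inj_def)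
  have "(\<Sum>x\<in>Cons 0 ` A \<union> sh ` B. f x) = (\<Sum>x\<in>Cons 0 ` A. f x) + (\<Sum>x\<in>sh ` B. f x)"
    using assms by (intro sum.union_disjoint) (auto simp: disj)
  also have "\<dots> = (\<Sum>a\<in>A. f (0#a)) + (\<Sum>b\<in>B. f (sh b))"
    using sum.reindex[OF i1, of f] sum.reindex[OF i2, of f] by simp
  finally show ?thesis .
qed

definition dp :: "ptree \<Rightarrow> nat" where "dp t = (\<Sum>p\<in>vertices t. length p)"
definition ds :: "ptree \<Rightarrow> nat" where "ds t = (\<Sum>u\<in>vertices t. \<Sum>w\<in>vertices t. tdist u w)"
definition lc :: "ptree \<Rightarrow> nat" where "lc t = card (leaves t)"
definition ld :: "ptree \<Rightarrow> nat" where "ld t = (\<Sum>l\<in>leaves t. depth l)"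

lemmas sum_Suc' = sum_Suc

lemma dp_join: "dp (join t u) = dp t + tsize t + dp u"
  unfolding dp_def vertices_join
  by (simp add: sum_split sum.distrib sum_Suc')

lemma sum_cross: "(\<Sum>a\<in>vertices t. \<Sum>b\<in>vertices u. Suc (length a + length b))
   = (dp t + tsize t) * tsize u + dp u * tsize t"
proof -
  have "(\<Sum>a\<in>vertices t. \<Sum>b\<in>vertices u. Suc (length a + length b))
     = (\<Sum>a\<in>vertices t. tsize u * (Suc (length a)) + dp u)"
    by (simp add: sum_Suc sum.distrib dp_def)
  also have "\<dots> = tsize u * (\<Sum>a\<in>vertices t. Suc (length a)) + dp u * tsize t"
    by (simp add: sum.distrib sum_distrib_left)
  also have "(\<Sum>a\<in>vertices t. Suc (length a)) = dp t + tsize t"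
    by (simp add: sum_Suc dp_def)
  finally show ?thesis by (simp add: mult.commute)
qed

lemma ds_join: "ds (join t u) = ds t + ds u + 2 * ((dp t + tsize t) * tsize u + dp u * tsize t)"
proof -
  define S where "S = (\<Sum>a\<in>vertices t. \<Sum>b\<in>vertices u. Suc (length a + length b))"
  have "ds (join t u) = (\<Sum>a\<in>vertices t. (\<Sum>a'\<in>vertices t. tdist a a') + (\<Sum>b\<in>vertices u. Suc (length a + length b)))
      + (\<Sum>b\<in>vertices u. (\<Sum>a\<in>vertices t. Suc (length b + length a)) + (\<Sum>b'\<in>vertices u. tdist b b'))"
    unfolding ds_def vertices_join by (simp add: sum_split)
  also have "\<dots> = ds t + S
      + ((\<Sum>b\<in>vertices u. \<Sum>a\<in>vertices t. Suc (length b + length a)) + ds u)"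
    unfolding S_def by (simp add: sum.distrib ds_def)
  also have "(\<Sum>b\<in>vertices u. \<Sum>a\<in>vertices t. Suc (length b + length a)) = S"
    unfolding S_def by (subst sum.swap) (simp add: add.commute)
  finally show ?thesis using sum_cross[where t=t and u=u] unfolding S_def[symmetric] by simp
qed

lemma lc_join: "lc (join t u) + (if u = Node [] then 1 else 0) = lc t + lc u"
proof -
  have i1: "inj_on (Cons 0) (leaves t)" by (simp add: inj_on_def)
  have i2: "inj_on sh (leaves u - {[]})" using sh_inj by (simp add: inj_on_def inj_def)
  have "lc (join t u) = card (leaves t) + card (leaves u - {[]})"
    unfolding lc_def leaves_join
    by (subst card_Un_disjoint) (auto simp: card_image[OF i1] card_image[OF i2] disj)
  then show ?thesis using leaf_in_leaves[of u] by (auto simp: lc_def card_Diff_singleton_if)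
qed

lemma ld_join: "ld (join t u) = ld t + lc t + ld u"
proof -
  have "ld (join t u) = (\<Sum>l\<in>leaves t. length l + 1) + (\<Sum>l\<in>leaves u - {[]}. length l)"
    unfolding ld_def leaves_join depth_def by (simp add: sum_split)
  also have "(\<Sum>l\<in>leaves u - {[]}. length l) = (\<Sum>l\<in>leaves u. length l)"
    by (rule sum.mono_neutral_left) auto
  finally show ?thesis by (simp add: ld_def lc_def depth_def sum_Suc')
qed

lemma stats_leaf: "dp (Node []) = 0" "ds (Node []) = 0" "lc (Node []) = 1" "ld (Node []) = 0"
  by (simp_all add: dp_def ds_def lc_def ld_def depth_def)


lemma pair_dist_eq: "pair_dist {a, b} = tdist a b"
  unfolding pair_dist_def
proof (rule someI2[where a = "tdist a b"])
  show "\<exists>u w. {a, b} = {u, w} \<and> tdist a b = tdist u w" by blast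
next
  fix d assume "\<exists>u w. {a, b} = {u, w} \<and> d = tdist u w"
  then obtain u w where "{a, b} = {u, w}" "d = tdist u w" by blast
  then show "d = tdist a b" by (metis doubleton_eq_iff tdist_sym)
qed

lemma vpairs_alt: "vpairs t = {B. B \<subseteq> vertices t \<and> card B = 2}"
  unfolding vpairs_def by (auto simp: card_2_iff)

lemma card_vpairs: "card (vpairs t) = tsize t choose 2"
  unfolding vpairs_alt by (simp add: n_subsets)

lemma finite_vpairs[simp]: "finite (vpairs t)"
proof -
  have "vpairs t \<subseteq> Pow (vertices t)" unfolding vpairs_def by auto
  then show ?thesis using finite_vertices by (meson finite_Pow_iff finite_subset)
qed

lemma wiener_ds: "2 * wiener t = ds t"
proof -
  define V where "V = vertices t"
  define Off where "Off = {x \<in> V \<times> V. fst x \<noteq> snd x}"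
  have fV: "finite V" unfolding V_def by simp
  have fOff: "finite Off" unfolding Off_def using fV by simp
  have "ds t = (\<Sum>x\<in>V \<times> V. tdist (fst x) (snd x))"
    unfolding ds_def V_def by (simp add: sum.cartesian_product split_def)
  also have "\<dots> = (\<Sum>x\<in>Off. tdist (fst x) (snd x))"
    by (rule sum.mono_neutral_right) (auto simp: Off_def fV)
  also have "\<dots> = (\<Sum>e\<in>vpairs t. \<Sum>x\<in>{x. x \<in> Off \<and> (\<lambda>x. {fst x, snd x}) x = e}. tdist (fst x) (snd x))"
    by (rule sum.group[symmetric], rule fOff, rule finite_vpairs) (auto simp: Off_def V_def vpairs_def, blast)
  also have "\<dots> = (\<Sum>e\<in>vpairs t. 2 * pair_dist e)"
  proof (rule sum.cong[OF refl])
    fix e assume "e \<in> vpairs t"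
    then obtain a b where ab: "e = {a, b}" "a \<in> V" "b \<in> V" "a \<noteq> b"
      unfolding vpairs_def V_def by blast
    have "{x. x \<in> Off \<and> {fst x, snd x} = e} = {(a, b), (b, a)}"
      using ab by (auto simp: Off_def doubleton_eq_iff)
    then show "(\<Sum>x\<in>{x. x \<in> Off \<and> (\<lambda>x. {fst x, snd x}) x = e}. tdist (fst x) (snd x)) = 2 * pair_dist e"
      using ab by (simp add: pair_dist_eq tdist_sym)
  qed
  finally show ?thesis unfolding wiener_def by (simp add: sum_distrib_left)
qed


lemma PT_0: "plane_trees 0 = {}"
proof -
  have "tsize t \<noteq> 0" for t using tsize_pos[of t] by linarith
  then show ?thesis by (auto simp: plane_trees_def)
qed

lemma tsize_one: "tsize t = 1 \<longleftrightarrow> t = Node []"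
proof (cases t rule: ptree_cases_join)
  case 1 then show ?thesis by simp
next
  case (2 a b)
  then show ?thesis using tsize_pos[of a] tsize_pos[of b] by (auto simp: join_def split: ptree.splits)
qed

lemma PT_1: "plane_trees 1 = {Node []}"
  using tsize_one by (auto simp: plane_trees_def)

lemma PT_1': "plane_trees (Suc 0) = {Node []}"
  using PT_1 by simp

lemma join_inj: "join t u = join t' u' \<Longrightarrow> t = t' \<and> u = u'"
  by (cases u; cases u') (auto simp: join_def)

lemma PT_decomp:
  assumes "n \<ge> 2"
  shows "plane_trees n = (\<lambda>(a, t, u). join t u) ` (SIGMA a:{1..n-1}. plane_trees a \<times> plane_trees (n - a))"
proof (rule set_eqI)
  fix x
  show "x \<in> plane_trees n \<longleftrightarrow> x \<in> (\<lambda>(a, t, u). join t u) ` (SIGMA a:{1..n-1}. plane_trees a \<times> plane_trees (n - a))"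
  proof
    assume x: "x \<in> plane_trees n"
    then have "x \<noteq> Node []" using assms by (auto simp: plane_trees_def)
    then obtain t u where xe: "x = join t u" by (cases x rule: ptree_cases_join) auto
    have "tsize t + tsize u = n" using x xe by (simp add: plane_trees_def)
    then have "(tsize t, t, u) \<in> (SIGMA a:{1..n-1}. plane_trees a \<times> plane_trees (n - a))"
      using tsize_pos[of t] tsize_pos[of u] by (auto simp: plane_trees_def)
    then show "x \<in> (\<lambda>(a, t, u). join t u) ` (SIGMA a:{1..n-1}. plane_trees a \<times> plane_trees (n - a))"
      using xe by (metis (no_types, lifting) case_prod_conv image_eqI)
  next
    assume "x \<in> (\<lambda>(a, t, u). join t u) ` (SIGMA a:{1..n-1}. plane_trees a \<times> plane_trees (n - a))"
    then obtain a t u where "x = join t u" "a \<in> {1..n-1}" "tsize t = a" "tsize u = n - a"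
      by (auto simp: plane_trees_def)
    then show "x \<in> plane_trees n" by (auto simp: plane_trees_def)
  qed
qed

lemma PT_inj:
  "inj_on (\<lambda>(a, t, u). join t u) (SIGMA a:{1..n-1}. plane_trees a \<times> plane_trees (n - a))"
  by (rule inj_onI) (auto simp: plane_trees_def dest: join_inj)

lemma finite_PT: "finite (plane_trees n)"
proof (induction n rule: less_induct)
  case (less n)
  consider "n = 0" | "n = 1" | "n \<ge> 2" by linarith
  then show ?case
  proof cases
    case 3
    have "finite (SIGMA a:{1..n-1}. plane_trees a \<times> plane_trees (n - a))"
      using 3 less by (intro finite_SigmaI) auto
    then show ?thesis using PT_decomp[OF 3] by simp
  qed (simp_all add: PT_0 PT_1')
qed

lemma sum_PT:
  assumes "n \<ge> 2"
  shows "(\<Sum>x\<in>plane_trees n. G x) = (\<Sum>a=1..n-1. \<Sum>t\<in>plane_trees a. \<Sum>u\<in>plane_trees (n - a). G (join t u))"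
proof -
  have "(\<Sum>x\<in>plane_trees n. G x) = (\<Sum>x\<in>(SIGMA a:{1..n-1}. plane_trees a \<times> plane_trees (n - a)). G ((\<lambda>(a, t, u). join t u) x))"
    unfolding PT_decomp[OF assms] by (subst sum.reindex[OF PT_inj]) (simp add: o_def)
  also have "\<dots> = (\<Sum>(a,tu)\<in>(SIGMA a:{1..n-1}. plane_trees a \<times> plane_trees (n - a)). G (join (fst tu) (snd tu)))"
    by (rule sum.cong) auto
  also have "\<dots> = (\<Sum>a=1..n-1. \<Sum>tu\<in>plane_trees a \<times> plane_trees (n - a). G (join (fst tu) (snd tu)))"
    by (rule sum.Sigma[symmetric]) (auto simp: finite_PT)
  also have "\<dots> = (\<Sum>a=1..n-1. \<Sum>t\<in>plane_trees a. \<Sum>u\<in>plane_trees (n - a). G (join t u))"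
    by (simp add: sum.cartesian_product split_def)
  finally show ?thesis .
qed

definition ser :: "(ptree \<Rightarrow> real) \<Rightarrow> real fps" where
  "ser g = Abs_fps (\<lambda>n. \<Sum>t\<in>plane_trees n. g t)"

lemma ser_nth: "fps_nth (ser g) n = (\<Sum>t\<in>plane_trees n. g t)"
  by (simp add: ser_def)

lemma conv: "fps_nth (ser f * ser g) n = (\<Sum>a=1..n-1. \<Sum>t\<in>plane_trees a. \<Sum>u\<in>plane_trees (n - a). f t * g u)"
proof -
  have "fps_nth (ser f * ser g) n = (\<Sum>i=0..n. (\<Sum>t\<in>plane_trees i. f t) * (\<Sum>u\<in>plane_trees (n - i). g u))"
    by (simp add: fps_mult_nth ser_nth)
  also have "\<dots> = (\<Sum>i=1..n-1. (\<Sum>t\<in>plane_trees i. f t) * (\<Sum>u\<in>plane_trees (n - i). g u))"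
  proof -
    have zero: "\<forall>i\<in>{0..n} - {1..n - 1}. (\<Sum>t\<in>plane_trees i. f t) * (\<Sum>u\<in>plane_trees (n - i). g u) = 0"
    proof
      fix i assume "i \<in> {0..n} - {1..n - 1}"
      then have "i = 0 \<or> n - i = 0" by auto
      then show "(\<Sum>t\<in>plane_trees i. f t) * (\<Sum>u\<in>plane_trees (n - i). g u) = 0"
        by (auto simp: PT_0)
    qed
    show ?thesis by (rule sum.mono_neutral_right[OF _ _ zero]) auto
  qed
  also have "\<dots> = (\<Sum>a=1..n-1. \<Sum>t\<in>plane_trees a. \<Sum>u\<in>plane_trees (n - a). f t * g u)"
    by (simp add: sum_product)
  finally show ?thesis .
qed

lemma ser_X: "ser (\<lambda>t. if t = Node [] then 1 else 0) = fps_X"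
proof (rule fps_ext)
  fix n
  show "fps_nth (ser (\<lambda>t. if t = Node [] then 1 else 0)) n = fps_nth fps_X n"
  proof (cases "n = 1")
    case True then show ?thesis by (simp add: ser_nth PT_1')
  next
    case False
    then have "Node [] \<notin> plane_trees n" by (simp add: plane_trees_def)
    then show ?thesis using False by (auto simp: ser_nth fps_X_def intro!: sum.neutral)
  qed
qed


section \<open>Generating function equations\<close>

definition "PP = ser (\<lambda>_. 1)"
definition "NG = ser (\<lambda>t. real (tsize t))"
definition "DG = ser (\<lambda>t. real (dp t))"
definition "SG = ser (\<lambda>t. real (ds t))"
definition "LG = ser (\<lambda>t. real (lc t))"
definition "LDG = ser (\<lambda>t. real (ld t))"

lemma coeff_cases:
  assumes "fps_nth A 0 = fps_nth B 0" "fps_nth A 1 = fps_nth B 1" "\<And>n. n \<ge> 2 \<Longrightarrow> fps_nth A n = fps_nth B n"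
  shows "A = B"
proof (rule fps_ext)
  fix n show "fps_nth A n = fps_nth B n"
    using assms by (cases "n = 0"; cases "n = 1") auto
qed

lemma conv01: "fps_nth (ser f * ser g) 0 = 0" "fps_nth (ser f * ser g) 1 = 0"
  by (simp_all only: conv) simp_all

lemma ser0: "fps_nth (ser f) 0 = 0"
  by (simp add: ser_nth PT_0)

lemma ser1: "fps_nth (ser f) 1 = f (Node [])"
  by (simp add: ser_nth PT_1')

lemma ser_join: "n \<ge> 2 \<Longrightarrow> fps_nth (ser G) n = (\<Sum>a=1..n-1. \<Sum>t\<in>plane_trees a. \<Sum>u\<in>plane_trees (n - a). G (join t u))"
  by (simp only: ser_nth sum_PT)

lemma X_nth: "fps_nth fps_X 0 = 0" "fps_nth fps_X 1 = 1" "n \<ge> 2 \<Longrightarrow> fps_nth fps_X n = 0"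
  by (simp_all add: fps_X_def)

lemmas E_simps = fps_add_nth conv01 ser0 ser1 X_nth

lemma E1: "PP = fps_X + PP * PP"
  unfolding PP_def
proof (rule coeff_cases)
  fix n :: nat assume n: "n \<ge> 2"
  show "fps_nth (ser (\<lambda>_. 1)) n = fps_nth (fps_X + ser (\<lambda>_. 1) * ser (\<lambda>_. 1)) n"
    by (simp only: E_simps ser_join[OF n] X_nth(3)[OF n] conv) simp
qed (simp only: E_simps; simp)+

lemma E2: "NG = fps_X + NG * PP + PP * NG"
  unfolding PP_def NG_def
proof (rule coeff_cases)
  fix n :: nat assume n: "n \<ge> 2"
  show "fps_nth (ser (\<lambda>t. real (tsize t))) n = fps_nth (fps_X + ser (\<lambda>t. real (tsize t)) * ser (\<lambda>_. 1) + ser (\<lambda>_. 1) * ser (\<lambda>t. real (tsize t))) n"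
    by (simp only: E_simps ser_join[OF n] X_nth(3)[OF n] conv) (simp add: sum.distrib)
qed (simp only: E_simps; simp)+

lemma E3: "DG = DG * PP + NG * PP + PP * DG"
  unfolding PP_def NG_def DG_def
proof (rule coeff_cases)
  fix n :: nat assume n: "n \<ge> 2"
  show "fps_nth (ser (\<lambda>t. real (dp t))) n = fps_nth (ser (\<lambda>t. real (dp t)) * ser (\<lambda>_. 1) + ser (\<lambda>t. real (tsize t)) * ser (\<lambda>_. 1) + ser (\<lambda>_. 1) * ser (\<lambda>t. real (dp t))) n"
    by (simp only: E_simps ser_join[OF n] conv) (simp add: sum.distrib dp_join distrib_left)
qed (simp only: E_simps; simp add: stats_leaf)+

lemma E4: "SG = SG * PP + PP * SG + (DG * NG + NG * NG + NG * DG) + (DG * NG + NG * NG + NG * DG)"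
  unfolding PP_def NG_def DG_def SG_def
proof (rule coeff_cases)
  fix n :: nat assume n: "n \<ge> 2"
  have j: "real (ds (join t u)) = real (ds t) * 1 + 1 * real (ds u)
    + (real (dp t) * real (tsize u) + real (tsize t) * real (tsize u) + real (tsize t) * real (dp u))
    + (real (dp t) * real (tsize u) + real (tsize t) * real (tsize u) + real (tsize t) * real (dp u))" for t u
    by (simp add: ds_join algebra_simps)
  show "fps_nth (ser (\<lambda>t. real (ds t))) n = fps_nth (ser (\<lambda>t. real (ds t)) * ser (\<lambda>_. 1) + ser (\<lambda>_. 1) * ser (\<lambda>t. real (ds t))
     + (ser (\<lambda>t. real (dp t)) * ser (\<lambda>t. real (tsize t)) + ser (\<lambda>t. real (tsize t)) * ser (\<lambda>t. real (tsize t)) + ser (\<lambda>t. real (tsize t)) * ser (\<lambda>t. real (dp t)))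
     + (ser (\<lambda>t. real (dp t)) * ser (\<lambda>t. real (tsize t)) + ser (\<lambda>t. real (tsize t)) * ser (\<lambda>t. real (tsize t)) + ser (\<lambda>t. real (tsize t)) * ser (\<lambda>t. real (dp t)))) n"
    by (simp only: E_simps ser_join[OF n] conv j sum.distrib)
qed (simp only: E_simps; simp add: stats_leaf)+

lemma E5: "LG + PP * fps_X = fps_X + LG * PP + PP * LG"
  unfolding PP_def LG_def ser_X[symmetric]
proof (rule coeff_cases)
  fix n :: nat assume n: "n \<ge> 2"
  have j: "real (lc (join t u)) + 1 * (if u = Node [] then 1 else 0) = real (lc t) * 1 + 1 * real (lc u)" for t u
    using lc_join[of t u] by (simp split: if_splits)
  have "fps_nth (ser (\<lambda>t. real (lc t)) + ser (\<lambda>_. 1) * ser (\<lambda>t. if t = Node [] then 1 else 0)) n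
     = (\<Sum>a=1..n-1. \<Sum>t\<in>plane_trees a. \<Sum>u\<in>plane_trees (n - a). real (lc t) * 1 + 1 * real (lc u))"
    by (simp only: E_simps ser_join[OF n] conv sum.distrib[symmetric] j)
  also have "\<dots> = fps_nth (ser (\<lambda>t. if t = Node [] then 1 else 0) + ser (\<lambda>t. real (lc t)) * ser (\<lambda>_. 1) + ser (\<lambda>_. 1) * ser (\<lambda>t. real (lc t))) n"
    using n by (simp only: E_simps ser_join[OF n] conv sum.distrib ser_X X_nth(3); simp)
  finally show "fps_nth (ser (\<lambda>t. real (lc t)) + ser (\<lambda>_. 1) * ser (\<lambda>t. if t = Node [] then 1 else 0)) n
     = fps_nth (ser (\<lambda>t. if t = Node [] then 1 else 0) + ser (\<lambda>t. real (lc t)) * ser (\<lambda>_. 1) + ser (\<lambda>_. 1) * ser (\<lambda>t. real (lc t))) n" .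
qed (simp only: E_simps; simp add: stats_leaf)+

lemma E6: "LDG = LDG * PP + LG * PP + PP * LDG"
  unfolding PP_def LG_def LDG_def
proof (rule coeff_cases)
  fix n :: nat assume n: "n \<ge> 2"
  show "fps_nth (ser (\<lambda>t. real (ld t))) n = fps_nth (ser (\<lambda>t. real (ld t)) * ser (\<lambda>_. 1) + ser (\<lambda>t. real (lc t)) * ser (\<lambda>_. 1) + ser (\<lambda>_. 1) * ser (\<lambda>t. real (ld t))) n"
    by (simp only: E_simps ser_join[OF n] conv) (simp add: sum.distrib ld_join distrib_left)
qed (simp only: E_simps; simp add: stats_leaf)+


lemma A_SG: "SG * (1 - 4 * fps_X)^2 = 2 * fps_X^2"
  using E1 E2 E3 E4 by algebra

lemma A_LDG: "LDG * (1 - 4 * fps_X) = fps_X^2"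
  using E1 E5 E6 by algebra

lemma A_LG0: "(2 * LG - NG - fps_X) * (1 - 2 * PP) = 0"
  using E1 E2 E5 by algebra

lemma A_NG: "NG * (1 - 4 * fps_X) = fps_X - 2 * fps_X * PP"
  using E1 E2 by algebra

lemma nz1: "(1 - 2 * PP) \<noteq> (0 :: real fps)"
proof -
  have "fps_nth (1 - 2 * PP) 0 = 1" by (simp add: PP_def ser0)
  then show ?thesis using fps_nonzeroI[of "1 - 2 * PP" 0] by simp
qed

lemma nz2: "(1 - 4 * fps_X) \<noteq> (0 :: real fps)"
proof -
  have "fps_nth (1 - 4 * fps_X :: real fps) 0 = 1" by simp
  then show ?thesis using fps_nonzeroI[of "1 - 4 * fps_X :: real fps" 0] by simp
qed

lemma A_LG: "2 * LG = NG + fps_X"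
proof -
  have "2 * LG - NG - fps_X = 0" using A_LG0 nz1 mult_eq_0_iff by blast
  then show ?thesis by algebra
qed

definition "G1 = Abs_fps (\<lambda>n. (4::real) ^ n)"
definition "G2 = Abs_fps (\<lambda>n. real (n + 1) * (4::real) ^ n)"

lemma G1_eq: "G1 * (1 - 4 * fps_X) = 1"
proof -
  have "G1 * (1 - 4 * fps_X) = G1 - fps_const 4 * (fps_X * G1)"
    by (simp add: algebra_simps numeral_fps_const)
  also have "\<dots> = 1"
  proof (rule fps_ext)
    fix n show "fps_nth (G1 - fps_const 4 * (fps_X * G1)) n = fps_nth 1 n"
      by (cases n) (simp_all add: G1_def)
  qed
  finally show ?thesis .
qed

lemma G2_eq: "G2 * (1 - 4 * fps_X) = G1"
proof -
  have "G2 * (1 - 4 * fps_X) = G2 - fps_const 4 * (fps_X * G2)"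
    by (simp add: algebra_simps numeral_fps_const)
  also have "\<dots> = G1"
  proof (rule fps_ext)
    fix n show "fps_nth (G2 - fps_const 4 * (fps_X * G2)) n = fps_nth G1 n"
      by (cases n) (simp_all add: G1_def G2_def algebra_simps)
  qed
  finally show ?thesis .
qed

lemma SG_closed: "SG = fps_const 2 * (fps_X^2 * G2)"
proof -
  have "SG * (1 - 4 * fps_X)^2 = (fps_const 2 * (fps_X^2 * G2)) * (1 - 4 * fps_X)^2"
    using A_SG G1_eq G2_eq by (simp only: numeral_fps_const[symmetric]) algebra
  then show ?thesis using nz2 by simp
qed

lemma LDG_closed: "LDG = fps_X^2 * G1"
proof -
  have "LDG * (1 - 4 * fps_X) = (fps_X^2 * G1) * (1 - 4 * fps_X)"
    using A_LDG G1_eq by algebra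
  then show ?thesis using nz2 by simp
qed

lemma SG_nth: "n \<ge> 2 \<Longrightarrow> fps_nth SG n = 2 * (real (n - 1) * 4 ^ (n - 2))"
  by (simp add: SG_closed fps_X_power_mult_nth G2_def)

lemma LDG_nth: "n \<ge> 2 \<Longrightarrow> fps_nth LDG n = 4 ^ (n - 2)"
  by (simp add: LDG_closed fps_X_power_mult_nth G1_def)


lemma PP_nth: "fps_nth PP n = real (card (plane_trees n))"
  by (simp add: PP_def ser_nth)

lemma NG_nth: "fps_nth NG n = real n * fps_nth PP n"
proof -
  have "fps_nth NG n = (\<Sum>t\<in>plane_trees n. real n)"
    unfolding NG_def ser_nth by (rule sum.cong) (auto simp: plane_trees_def)
  then show ?thesis by (simp add: PP_nth)
qed

lemma catalan_rec:
  assumes "n \<ge> 1"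
  shows "real (n + 1) * fps_nth PP (n + 1) = (4 * real n - 2) * fps_nth PP n"
proof -
  have e: "NG - fps_const 4 * (fps_X * NG) = fps_X - fps_const 2 * (fps_X * PP)"
    using A_NG by (simp only: numeral_fps_const[symmetric]) algebra
  have "fps_nth (NG - fps_const 4 * (fps_X * NG)) (Suc n) = fps_nth (fps_X - fps_const 2 * (fps_X * PP)) (Suc n)"
    by (simp only: e)
  then have "fps_nth NG (Suc n) - 4 * fps_nth NG n = - 2 * fps_nth PP n"
    using assms by simp
  then show ?thesis by (simp add: NG_nth algebra_simps)
qed

lemma dfact_pos: "dfact n > 0"
  by (induction n rule: dfact.induct) auto

lemma dfact_odd: "dfact (2 * m + 1) = (2 * m + 1) * dfact (2 * m - 1)"
proof (cases m)
  case 0 then show ?thesis by simp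
next
  case (Suc k)
  have "2 * m + 1 = Suc (Suc (2 * k + 1))" "2 * m - 1 = 2 * k + 1" using Suc by auto
  then show ?thesis by simp
qed

lemma dfact_even: "dfact (2 * m + 2) = (2 * m + 2) * dfact (2 * m)"
proof -
  have "2 * m + 2 = Suc (Suc (2 * m))" by simp
  then show ?thesis by simp
qed

lemma cat_dfact: "real (m + 1) * fps_nth PP (m + 1) * real (dfact (2 * m)) = 4 ^ m * real (dfact (2 * m - 1))"
proof (induction m)
  case 0
  have "fps_nth PP 1 = 1" unfolding PP_def by (rule trans[OF ser1]) simp
  then show ?case by simp
next
  case (Suc m)
  have r: "real (m + 2) * fps_nth PP (m + 2) = (4 * real (m + 1) - 2) * fps_nth PP (m + 1)"
    using catalan_rec[of "m + 1"] by (simp add: add.commute)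
  have d1: "real (dfact (2 * Suc m)) = (2 * real m + 2) * real (dfact (2 * m))"
    using dfact_even[of m] by (simp add: algebra_simps)
  have d2: "real (dfact (2 * Suc m - 1)) = (2 * real m + 1) * real (dfact (2 * m - 1))"
    using dfact_odd[of m] by (simp add: algebra_simps)
  have "real (Suc m + 1) * fps_nth PP (Suc m + 1) * real (dfact (2 * Suc m))
      = (4 * real (m + 1) - 2) * fps_nth PP (m + 1) * ((2 * real m + 2) * real (dfact (2 * m)))"
    using r d1 by (simp add: add.commute)
  also have "\<dots> = 2 * (2 * real m + 1) * 2 * (real (m + 1) * fps_nth PP (m + 1) * real (dfact (2 * m)))"
    by (simp add: algebra_simps)
  also have "\<dots> = 4 ^ Suc m * real (dfact (2 * Suc m - 1))"
    using Suc d2 by (simp add: algebra_simps)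
  finally show ?case .
qed

lemma choose2_real: "real (n choose 2) * 2 = real n * (real n - 1)"
proof (induction n)
  case 0 then show ?case by simp
next
  case (Suc n)
  have "Suc n choose 2 = n + (n choose 2)"
    by (simp add: numeral_2_eq_2)
  then show ?case using Suc by (simp add: algebra_simps)
qed


theorem corollary3p3:
  fixes n :: nat
  assumes "n \<ge> 2"
  shows "(\<Sum>t\<in>plane_trees n. wiener t) = (n - 1) * 4 ^ (n - 2)
    \<and> (\<Sum>t\<in>plane_trees n. real (wiener t) / real (card (vpairs t)))
        / real (card (plane_trees n))
      = real (dfact (2 * n - 2)) / (2 * real (dfact (2 * n - 3)))
    \<and> (\<Sum>t\<in>plane_trees n. real (wiener t) / real (card (vpairs t)))
        / real (card (plane_trees n))
      = (\<Sum>(t, l)\<in>{(t, l). t \<in> plane_trees n \<and> l \<in> leaves t}. real (depth l))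
        / real (card {(t, l). t \<in> plane_trees n \<and> l \<in> leaves t})"
proof -
  have n2: "n \<ge> 2" by fact
  define c where "c = real (card (plane_trees n))"
  define m where "m = n - 1"
  have nm: "n = m + 1" "m \<ge> 1" using n2 by (auto simp: m_def)
  have cd: "real n * c * real (dfact (2 * n - 2)) = 4 ^ (n - 1) * real (dfact (2 * n - 3))"
  proof -
    have "2 * n - 2 = 2 * m" "2 * n - 3 = 2 * m - 1" "n - 1 = m" using nm by auto
    then show ?thesis using cat_dfact[of m] nm by (simp add: c_def PP_nth)
  qed
  have d2pos: "real (dfact (2 * n - 2)) > 0" "real (dfact (2 * n - 3)) > 0" using dfact_pos by auto
  have cpos: "c > 0"
  proof -
    have "real n * c * real (dfact (2 * n - 2)) > 0" using cd d2pos by simp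
    moreover have "c \<ge> 0" by (simp add: c_def)
    moreover have "c \<noteq> 0" using calculation(1) by (cases "c = 0") auto
    ultimately show ?thesis by simp
  qed
  have ws: "real (\<Sum>t\<in>plane_trees n. wiener t) = real (n - 1) * 4 ^ (n - 2)"
  proof -
    have "2 * real (\<Sum>t\<in>plane_trees n. wiener t) = (\<Sum>t\<in>plane_trees n. real (ds t))"
      by (simp add: sum_distrib_left wiener_ds[symmetric])
    also have "\<dots> = fps_nth SG n" by (simp add: SG_def ser_nth)
    also have "\<dots> = 2 * (real (n - 1) * 4 ^ (n - 2))" using SG_nth[OF n2] .
    finally show ?thesis by simp
  qed
  have W: "(\<Sum>t\<in>plane_trees n. wiener t) = (n - 1) * 4 ^ (n - 2)"
  proof -
    have "real (\<Sum>t\<in>plane_trees n. wiener t) = real ((n - 1) * 4 ^ (n - 2))" using ws by simp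
    then show ?thesis by (simp only: of_nat_eq_iff)
  qed
  define B where "B = real (n choose 2)"
  have B2: "B * 2 = real n * (real n - 1)" using choose2_real by (simp add: B_def)
  have avg: "(\<Sum>t\<in>plane_trees n. real (wiener t) / real (card (vpairs t))) / c
      = 2 * 4 ^ (n - 2) / (real n * c)"
  proof -
    have "(\<Sum>t\<in>plane_trees n. real (wiener t) / real (card (vpairs t)))
        = (\<Sum>t\<in>plane_trees n. real (wiener t) / B)"
      by (rule sum.cong) (auto simp: card_vpairs B_def plane_trees_def)
    also have "\<dots> = real (\<Sum>t\<in>plane_trees n. wiener t) / B"
      by (simp add: sum_divide_distrib)
    finally have e: "(\<Sum>t\<in>plane_trees n. real (wiener t) / real (card (vpairs t))) = real (n - 1) * 4 ^ (n - 2) / B"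
      using ws by simp
    have rn: "real (n - 1) = real n - 1" using n2 by simp
    have nz: "real n - 1 \<noteq> 0" "real n \<noteq> 0" using n2 by auto
    have Beq: "B = real n * (real n - 1) / 2" using B2 by simp
    show ?thesis unfolding e rn Beq using nz cpos by (simp add: field_simps)
  qed
  define LS where "LS = {(t, l). t \<in> plane_trees n \<and> l \<in> leaves t}"
  have LS: "LS = Sigma (plane_trees n) leaves" by (auto simp: LS_def)
  have cardLS: "real (card LS) = real n * c / 2"
  proof -
    have "real (card LS) = (\<Sum>t\<in>plane_trees n. real (lc t))"
      unfolding LS by (simp add: finite_PT lc_def)
    also have "\<dots> = fps_nth LG n" by (simp add: LG_def ser_nth)
    also have "\<dots> = fps_nth (2 * LG) n / 2" by (simp add: numeral_fps_const)
    also have "\<dots> = real n * c / 2" using n2 by (simp only: A_LG) (simp add: NG_nth PP_nth c_def)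
    finally show ?thesis .
  qed
  have sumLS: "(\<Sum>(t, l)\<in>LS. real (depth l)) = 4 ^ (n - 2)"
  proof -
    have "(\<Sum>(t, l)\<in>LS. real (depth l)) = (\<Sum>t\<in>plane_trees n. \<Sum>l\<in>leaves t. real (depth l))"
      unfolding LS by (rule sum.Sigma[symmetric]) (auto simp: finite_PT)
    also have "\<dots> = fps_nth LDG n" by (simp add: LDG_def ser_nth ld_def)
    also have "\<dots> = 4 ^ (n - 2)" using LDG_nth[OF n2] .
    finally show ?thesis .
  qed
  have conj2: "2 * 4 ^ (n - 2) / (real n * c) = real (dfact (2 * n - 2)) / (2 * real (dfact (2 * n - 3)))"
  proof -
    have p: "(4::real) ^ (n - 1) = 4 * 4 ^ (n - 2)"
    proof -
      have "n - 1 = Suc (n - 2)" using n2 by simp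
      then show ?thesis by simp
    qed
    have np: "real n > 0" using n2 by simp
    have "2 * 4 ^ (n - 2) * (2 * real (dfact (2 * n - 3))) = real (dfact (2 * n - 2)) * (real n * c)"
      using cd p by (simp add: algebra_simps)
    then show ?thesis using d2pos cpos np by (simp add: divide_eq_eq eq_divide_eq frac_eq_eq)
  qed
  have conj3: "2 * 4 ^ (n - 2) / (real n * c) = (4::real) ^ (n - 2) / (real n * c / 2)"
    by (simp add: field_simps)
  have A2: "(\<Sum>t\<in>plane_trees n. real (wiener t) / real (card (vpairs t))) / c
      = real (dfact (2 * n - 2)) / (2 * real (dfact (2 * n - 3)))"
    by (simp only: avg conj2)
  have A3: "(\<Sum>t\<in>plane_trees n. real (wiener t) / real (card (vpairs t))) / c
      = (\<Sum>(t, l)\<in>LS. real (depth l)) / real (card LS)"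
    by (simp only: avg conj3 sumLS cardLS)
  from W A2 A3 show ?thesis unfolding c_def LS_def by (intro conjI)
qed

end
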